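(* For every integer $t\ge 3$, $W(t-1)<t^{\frac{0.96}{\log\log t}}$, where $W(m)$ denotes the number of squarefree positive divisors of $m$ and $\log$ is the natural logarithm. *)

theory Defs
  imports Complex_Main "HOL-Computational_Algebra.Squarefree"
begin

definition W :: "nat \<Rightarrow> nat" where
  "W m = card {d. d dvd m \<and> 0 < d \<and> squarefree d}"

end

theory Submission
  imports Defs "HOL-Computational_Algebra.Primes" "HOL-Analysis.Harmonic_Numbers" "HOL-Analysis.Complex_Transcendental"
begin

definition ps :: "nat list" where "ps = [2,3,5,7,11,13,17,19,23,29,31,37,41,43,47,53]"
definition q :: "nat \<Rightarrow> nat" where "q j = (if j < 16 then ps ! j else max 53 (3*j - 5))"

lemma all_less_numeral: "(\<forall>n<(numeral k::nat). P n) = (P (pred_numeral k) \<and> (\<forall>n < pred_numeral k. P n))"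
  by (auto simp: numeral_eq_Suc less_Suc_eq)
lemma all_less_one: "(\<forall>n<(1::nat). P n) = P 0" by auto

lemma small_aux: "\<forall>p<54::nat. \<not> 2 dvd p \<and> \<not> 3 dvd p \<and> \<not> 5 dvd p \<and> \<not> 7 dvd p \<longrightarrow> p = 1 \<or> p \<in> set ps"
  by (simp add: all_less_numeral all_less_one ps_def)

lemma prime_small: assumes "prime (p::nat)" "p < 54" shows "p \<in> set ps"
proof (cases "p \<in> {2,3,5,7}")
  case True then show ?thesis by (auto simp: ps_def)
next
  case False
  have "\<not> 2 dvd p" "\<not> 3 dvd p" "\<not> 5 dvd p" "\<not> 7 dvd p"
    using assms(1) False prime_nat_iff[of p] by auto
  moreover have "p \<noteq> 1" using assms(1) by auto
  ultimately show ?thesis using small_aux assms(2) by blast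
qed

lemma q_mono_Suc: "q i \<le> q (Suc i)"
proof -
  have "\<forall>i<15. q i \<le> q (Suc i)"
    by (simp add: all_less_numeral all_less_one q_def ps_def)
  then show ?thesis by (cases "i < 15") (auto simp: q_def ps_def)
qed

lemma q_mono: "i \<le> j \<Longrightarrow> q i \<le> q j"
  using q_mono_Suc by (metis lift_Suc_mono_le)

lemma q_list: "\<forall>x\<in>set ps. q (length (filter (\<lambda>y. y < x) ps)) \<le> x"
  by (simp add: ps_def q_def)

lemma pi_bound: "card {p::nat. prime p \<and> p < x} \<le> (x - 1) div 3 + 2"
proof -
  define B where "B = {p::nat. prime p \<and> 5 \<le> p \<and> p < x}"
  have sub: "{p::nat. prime p \<and> p < x} \<subseteq> {2,3} \<union> B"
  proof
    fix p assume "p \<in> {p::nat. prime p \<and> p < x}"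
    then have p: "prime p" "p < x" by auto
    have "p \<ge> 2" using p prime_ge_2_nat by auto
    moreover have "p \<noteq> 4" using p prime_nat_iff[of 4] by force
    ultimately show "p \<in> {2,3} \<union> B" using p unfolding B_def by auto
  qed
  have inj: "inj_on (\<lambda>p. p div 3) B"
  proof
    fix p p' assume "p \<in> B" "p' \<in> B" and eq: "p div 3 = p' div 3"
    then have pp: "prime p" "prime p'" "5 \<le> p" "5 \<le> p'" by (auto simp: B_def)
    have "odd p" "odd p'" using pp prime_odd_nat by auto
    moreover have "\<not> 3 dvd p" "\<not> 3 dvd p'" using pp prime_nat_iff[of p] prime_nat_iff[of p'] by auto
    ultimately have o: "odd p" "odd p'" "\<not> 3 dvd p" "\<not> 3 dvd p'" by auto
    have m: "p mod 3 = 1 \<or> p mod 3 = 2" "p' mod 3 = 1 \<or> p' mod 3 = 2" using o(3,4) by presburger+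
    have d: "(p div 3) * 3 + p mod 3 = p" "(p' div 3) * 3 + p' mod 3 = p'" by (rule div_mult_mod_eq)+
    have "p mod 3 = p' mod 3"
    proof (rule ccontr)
      assume "p mod 3 \<noteq> p' mod 3"
      then have "p + p' = 6 * (p div 3) + 3" using m d eq by linarith
      then have "odd (p + p')" by presburger
      with o show False by simp
    qed
    then show "p = p'" using d eq by linarith
  qed
  have img: "(\<lambda>p. p div 3) ` B \<subseteq> {1..(x-1) div 3}"
    by (auto simp: B_def intro!: div_le_mono)
  have "card B \<le> (x - 1) div 3"
    using card_inj_on_le[OF inj img] by simp
  moreover have "card {p::nat. prime p \<and> p < x} \<le> card ({2,3} \<union> B)"
  proof (rule card_mono)
    have "finite B" unfolding B_def by (rule finite_subset[of _ "{..<x}"]) auto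
    then show "finite ({2,3} \<union> B)" by simp
  qed (rule sub)
  moreover have "card ({2::nat,3} \<union> B) \<le> 2 + card B"
    using card_Un_le[of "{2::nat,3}" B] by simp
  ultimately show ?thesis by linarith
qed

lemma q_prime: assumes "prime x" shows "q (card {p::nat. prime p \<and> p < x}) \<le> x"
proof (cases "x < 54")
  case True
  then have xs: "x \<in> set ps" using prime_small assms by blast
  have "{p::nat. prime p \<and> p < x} \<subseteq> set (filter (\<lambda>y. y < x) ps)"
    using prime_small True by auto
  then have "card {p::nat. prime p \<and> p < x} \<le> card (set (filter (\<lambda>y. y < x) ps))"
    by (intro card_mono) auto
  also have "\<dots> \<le> length (filter (\<lambda>y. y < x) ps)" by (rule card_length)
  finally have "q (card {p::nat. prime p \<and> p < x}) \<le> q (length (filter (\<lambda>y. y < x) ps))"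
    by (rule q_mono)
  also have "\<dots> \<le> x" using q_list xs by blast
  finally show ?thesis .
next
  case False
  define d where "d = (x - 1) div 3 + 2"
  have "q (card {p::nat. prime p \<and> p < x}) \<le> q d"
    using pi_bound q_mono d_def by blast
  also have "q d \<le> x"
  proof (cases "d < 16")
    case True
    then have "q d \<le> q 15" by (intro q_mono) simp
    also have "q 15 = 53" by (simp add: q_def ps_def)
    finally show ?thesis using False by simp
  next
    case c: False
    then have qd: "q d = max 53 (3*d - 5)" by (simp add: q_def)
    have g: "\<And>a. a*3 \<le> x - 1 \<Longrightarrow> 3*(a+2) - 5 \<le> x" using False by arith
    have "3 * d - 5 \<le> x" unfolding d_def by (rule g) (rule div_times_less_eq_dividend)
    then show ?thesis using False qd by simp
  qed
  finally show ?thesis .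
qed

lemma prod_lower:
  fixes P :: "nat set" and f :: "nat \<Rightarrow> nat"
  assumes "finite P" "\<forall>x\<in>P. f (card {y\<in>P. y < x}) \<le> x"
  shows "(\<Prod>i<card P. f i) \<le> \<Prod>P"
  using assms
proof (induction P rule: finite_linorder_max_induct)
  case empty then show ?case by simp
next
  case (insert b A)
  have bA: "b \<notin> A" using insert(2) by blast
  have "\<forall>x\<in>A. f (card {y\<in>A. y < x}) \<le> x"
  proof
    fix x assume x: "x \<in> A"
    then have "{y\<in>insert b A. y < x} = {y\<in>A. y < x}" using insert(2) by force
    then show "f (card {y\<in>A. y < x}) \<le> x" using insert(4) x by auto
  qed
  then have IH: "(\<Prod>i<card A. f i) \<le> \<Prod>A" using insert(3) by blast
  have "{y\<in>insert b A. y < b} = A" using insert(2) by auto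
  then have fb: "f (card A) \<le> b" using insert(4) by force
  have "(\<Prod>i<card (insert b A). f i) = (\<Prod>i<card A. f i) * f (card A)"
    using insert(1) bA by simp
  also have "\<dots> \<le> \<Prod>A * b" using IH fb by (rule mult_le_mono)
  also have "\<dots> = \<Prod>(insert b A)" using insert(1) bA by simp
  finally show ?case .
qed

lemma prod_primes_lower:
  assumes "finite P" "\<forall>p\<in>P. prime p"
  shows "(\<Prod>i<card P. q i) \<le> \<Prod>P"
proof (rule prod_lower[OF assms(1)], intro ballI)
  fix x assume x: "x \<in> P"
  have "{y\<in>P. y < x} \<subseteq> {p. prime p \<and> p < x}" using assms(2) by auto
  then have "card {y\<in>P. y < x} \<le> card {p. prime p \<and> p < x}"
    by (intro card_mono) auto
  then have "q (card {y\<in>P. y < x}) \<le> q (card {p. prime p \<and> p < x})" by (rule q_mono)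
  also have "\<dots> \<le> x" using q_prime assms(2) x by blast
  finally show "q (card {y\<in>P. y < x}) \<le> x" .
qed

lemma W_le: assumes "m > 0" shows "W m \<le> 2 ^ card (prime_factors m)"
proof -
  let ?D = "{d. d dvd m \<and> 0 < d \<and> squarefree d}"
  have mult: "multiplicity p d = (if p \<in> prime_factors d then 1 else 0)"
    if "d \<in> ?D" "prime p" for d p
  proof -
    have "d \<noteq> 0" using that by auto
    then have "multiplicity p d \<le> 1" using that squarefree_factorial_semiring''[of d] by auto
    then show ?thesis using that(2) by (auto simp: prime_factors_multiplicity)
  qed
  have inj: "inj_on prime_factors ?D"
  proof (rule inj_onI)
    fix d1 d2 assume d: "d1 \<in> ?D" "d2 \<in> ?D" "prime_factors d1 = prime_factors d2"
    have "normalize d1 = normalize d2"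
      by (rule multiplicity_eq_imp_eq) (use d mult in auto)
    then show "d1 = d2" by simp
  qed
  have img: "prime_factors ` ?D \<subseteq> Pow (prime_factors m)"
    using assms by (auto intro: dvd_prime_factors[THEN subsetD])
  have "W m = card ?D" by (simp add: W_def)
  also have "\<dots> \<le> card (Pow (prime_factors m))"
    by (rule card_inj_on_le[OF inj img]) simp
  also have "\<dots> = 2 ^ card (prime_factors m)" by (simp add: card_Pow)
  finally show ?thesis .
qed

lemma prod_pf_le: assumes "m > (0::nat)" shows "\<Prod>(prime_factors m) \<le> m"
proof -
  have "\<Prod>(prime_factors m) \<le> (\<Prod>p\<in>prime_factors m. p ^ multiplicity p m)"
  proof (rule prod_mono, safe)
    fix p assume p: "p \<in> prime_factors m"
    then have "multiplicity p m > 0" "p > 0" by (auto simp: prime_factors_multiplicity prime_gt_0_nat)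
    then show "p \<le> p ^ multiplicity p m" by (simp add: self_le_power)
  qed
  also have "\<dots> = m" using assms by (subst prod_prime_factors) auto
  finally show ?thesis .
qed


definition qprod :: "nat \<Rightarrow> nat" where "qprod n = (\<Prod>i<n. q i)"
lemma qprod_Suc: "qprod (Suc n) = qprod n * q n" by (simp add: qprod_def)
lemma qprod_0: "qprod 0 = 1" by (simp add: qprod_def)
lemma qprod_num: "qprod (numeral n) = qprod (pred_numeral n) * q (pred_numeral n)"
  by (simp add: numeral_eq_Suc qprod_Suc)
lemma q_vals: "q 0 = 2" "q 1 = 3" "q 2 = 5" "q 3 = 7" "q 4 = 11" "q 5 = 13" "q 6 = 17" "q 7 = 19"
 "q 8 = 23" "q 9 = 29" "q 10 = 31" "q 11 = 37" "q 12 = 41" "q 13 = 43" "q 14 = 47" "q 15 = 53"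
  by (simp_all add: q_def ps_def)
lemma q1: "q (Suc 0) = 3" by (simp add: q_def ps_def)
lemma q_big: "16 \<le> j \<Longrightarrow> q j = max 53 (3*j - 5)" by (simp add: q_def)
lemma q_pos: "0 < q i"
proof -
  have "q 0 \<le> q i" by (rule q_mono) simp
  then show ?thesis by (simp add: q_vals)
qed
lemma qprod_pos: "0 < qprod k" unfolding qprod_def using q_pos by (simp add: prod_pos)
lemma exp_lower: assumes "0 \<le> (x::real)" shows "(\<Sum>i<n. x^i / fact i) \<le> exp x"
proof -
  have s: "(\<lambda>i. x^i / fact i) sums exp x"
    using exp_converges[of x] by (simp add: field_simps)
  show ?thesis
    by (rule sum_le_suminf[OF sums_summable[OF s], of "{..<n}", unfolded sums_unique[OF s, symmetric]])
       (use assms in auto)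
qed

lemma T16: "(\<Sum>i<16. (x::real)^i / fact i) = 
  1 + x + x^2/2 + x^3/6 + x^4/24 + x^5/120 + x^6/720 + x^7/5040 + x^8/40320 + x^9/362880
  + x^10/3628800 + x^11/39916800 + x^12/479001600 + x^13/6227020800 + x^14/87178291200
  + x^15/1307674368000"
  by (simp add: lessThan_nat_numeral fact_numeral)


lemma ln2_hi: "ln (2::real) \<le> 0.6932"
proof -
  have "(2::real) \<le> (\<Sum>i<16. (0.6932::real)^i / fact i)"
    unfolding T16 by (simp add: power_divide)
  also have "\<dots> \<le> exp 0.6932" by (rule exp_lower) simp
  finally show ?thesis by (metis exp_gt_zero ln_exp ln_le_cancel_iff zero_less_numeral)
qed

lemma ln2_lo: "0.69302 \<le> ln (2::real)"
proof -
  have "(\<Sum>j<16. 2 / (2 * (real j + 16) + 1)) \<le> (\<Sum>j<16. ln (real (Suc j) + 16) - ln (real j + 16))"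
  proof (rule sum_mono)
    fix j :: nat assume "j \<in> {..<16}"
    have "2 * ((real j + 17) - (real j + 16)) / ((real j + 16) + (real j + 17)) \<le> ln (real j + 17) - ln (real j + 16)"
      by (rule ln_inverse_approx_ge) auto
    then show "2 / (2 * (real j + 16) + 1) \<le> ln (real (Suc j) + 16) - ln (real j + 16)"
      by (simp add: algebra_simps)
  qed
  also have "\<dots> = ln 32 - ln 16"
    by (subst sum_lessThan_telescope[where f = "\<lambda>j. ln (real j + 16)"]) simp
  also have "\<dots> = ln 2"
    using ln_div[of 32 16] by simp
  finally have "(\<Sum>j<16. 2 / (2 * (real j + 16) + 1)) \<le> ln (2::real)" .
  moreover have "0.69302 \<le> (\<Sum>j<16. 2 / (2 * (real j + 16) + 1::real))"
    by (simp add: lessThan_nat_numeral)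
  ultimately show ?thesis by linarith
qed

lemma e_lo: "2.7 \<le> exp (1::real)"
proof -
  have "(2.7::real) \<le> (\<Sum>i<16. (1::real)^i / fact i)"
    unfolding T16 by simp
  also have "\<dots> \<le> exp 1" by (rule exp_lower) simp
  finally show ?thesis .
qed

lemma e_hi: "exp (1::real) \<le> 2.72"
  using e_less_272 by simp

lemma ln_lower3:
  fixes M X N :: real
  assumes "0 < M" "M \<le> X" "X \<le> N"
  shows "ln M + 2*(X-M)/(X+M) + 2*(N-X)/(N+X) \<le> ln N"
proof -
  have a: "2*(X-M)/(X+M) \<le> ln X - ln M"
  proof (cases "M = X")
    case False then show ?thesis using ln_inverse_approx_ge[of M X] assms by (auto simp: ac_simps)
  qed simp
  have b: "2*(N-X)/(N+X) \<le> ln N - ln X"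
  proof (cases "N = X")
    case False then show ?thesis using ln_inverse_approx_ge[of X N] assms by (auto simp: ac_simps)
  qed simp
  show ?thesis using a b by linarith
qed

lemma case_gen:
  fixes X N l y :: real and a k :: nat
  assumes "2^a \<le> X" "X \<le> N"
    "l \<le> real a * 0.69302 + 2*(X - 2^a)/(X + 2^a) + 2*(N - X)/(N + X)"
    "2.72 \<le> l" "l < 1 + y + y^2/2 + y^3/6 + y^4/24 + y^5/120 + y^6/720 + y^7/5040 + y^8/40320 + y^9/362880
  + y^10/3628800 + y^11/39916800 + y^12/479001600 + y^13/6227020800 + y^14/87178291200
  + y^15/1307674368000" "0 \<le> y" "real k * 0.6932 * y \<le> 0.96 * l" "0 < k"
  shows "exp 1 \<le> l \<and> l \<le> ln N \<and> real k * ln 2 * ln l < 0.96 * l"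
proof (intro conjI)
  show "exp 1 \<le> l" using e_hi assms(4) by linarith
  have "ln ((2::real)^a) = real a * ln 2" by (rule ln_realpow)
  moreover have "real a * 0.69302 \<le> real a * ln 2" by (rule mult_left_mono[OF ln2_lo]) simp
  ultimately have "real a * 0.69302 \<le> ln ((2::real)^a)" by simp
  moreover have "ln ((2::real)^a) + 2*(X - 2^a)/(X + 2^a) + 2*(N - X)/(N + X) \<le> ln N"
    by (rule ln_lower3) (use assms in auto)
  ultimately show "l \<le> ln N" using assms(3) by linarith
  have lpos: "0 < l" using assms(4) by simp
  have "l < exp y" using assms(5) exp_lower[OF assms(6), of 16] unfolding T16 by linarith
  then have ly: "ln l < y" using lpos by (metis exp_gt_zero ln_exp ln_less_cancel_iff)
  have l1: "0 < ln l" using assms(4) by simp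
  have "real k * ln 2 * ln l \<le> real k * 0.6932 * ln l"
    using ln2_hi l1 by (intro mult_right_mono mult_left_mono) auto
  also have "\<dots> < real k * 0.6932 * y" using ly assms(8) by (intro mult_strict_left_mono) auto
  also have "\<dots> \<le> 0.96 * l" by (rule assms(7))
  finally show "real k * ln 2 * ln l < 0.96 * l" .
qed

lemma ck4: "\<exists>l. exp 1 \<le> l \<and> l \<le> ln (real (qprod 4)) \<and> real (4::nat) * ln 2 * ln l < 0.96 * l"
proof -
  have e: "qprod 4 = 210" by (simp add: qprod_num qprod_Suc qprod_0 q_vals q1)
  have "exp 1 \<le> (53437/10000::real) \<and> (53437/10000::real) \<le> ln (real (210::nat)) \<and> real (4::nat) * ln 2 * ln (53437/10000::real) < 0.96 * (53437/10000::real)"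
    by (rule case_gen[where a=7 and X="(4096/25::real)" and y="(37/20::real)"]) (simp_all add: power_divide)
  then show ?thesis unfolding e by blast
qed

lemma ck5: "\<exists>l. exp 1 \<le> l \<and> l \<le> ln (real (qprod 5)) \<and> real (5::nat) * ln 2 * ln l < 0.96 * l"
proof -
  have e: "qprod 5 = 2310" by (simp add: qprod_num qprod_Suc qprod_0 q_vals q1)
  have "exp 1 \<le> (15487/2000::real) \<and> (15487/2000::real) \<le> ln (real (2310::nat)) \<and> real (5::nat) * ln 2 * ln (15487/2000::real) < 0.96 * (15487/2000::real)"
    by (rule case_gen[where a=11 and X="(271616/125::real)" and y="(21447/10000::real)"]) (simp_all add: power_divide)
  then show ?thesis unfolding e by blast
qed

lemma ck6: "\<exists>l. exp 1 \<le> l \<and> l \<le> ln (real (qprod 6)) \<and> real (6::nat) * ln 2 * ln l < 0.96 * l"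
proof -
  have e: "qprod 6 = 30030" by (simp add: qprod_num qprod_Suc qprod_0 q_vals q1)
  have "exp 1 \<le> (20607/2000::real) \<and> (20607/2000::real) \<le> ln (real (30030::nat)) \<and> real (6::nat) * ln 2 * ln (20607/2000::real) < 0.96 * (20607/2000::real)"
    by (rule case_gen[where a=14 and X="(2770944/125::real)" and y="(23781/10000::real)"]) (simp_all add: power_divide)
  then show ?thesis unfolding e by blast
qed

lemma ck7: "\<exists>l. exp 1 \<le> l \<and> l \<le> ln (real (qprod 7)) \<and> real (7::nat) * ln 2 * ln l < 0.96 * l"
proof -
  have e: "qprod 7 = 510510" by (simp add: qprod_num qprod_Suc qprod_0 q_vals q1)
  have "exp 1 \<le> (131347/10000::real) \<and> (131347/10000::real) \<le> ln (real (510510::nat)) \<and> real (7::nat) * ln 2 * ln (131347/10000::real) < 0.96 * (131347/10000::real)"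
    by (rule case_gen[where a=18 and X="(9142272/25::real)" and y="(5197/2000::real)"]) (simp_all add: power_divide)
  then show ?thesis unfolding e by blast
qed

lemma ck8: "\<exists>l. exp 1 \<le> l \<and> l \<le> ln (real (qprod 8)) \<and> real (8::nat) * ln 2 * ln l < 0.96 * l"
proof -
  have e: "qprod 8 = 9699690" by (simp add: qprod_num qprod_Suc qprod_0 q_vals q1)
  have "exp 1 \<le> (80423/5000::real) \<and> (80423/5000::real) \<le> ln (real (9699690::nat)) \<and> real (8::nat) * ln 2 * ln (80423/5000::real) < 0.96 * (80423/5000::real)"
    by (rule case_gen[where a=23 and X="(1126170624/125::real)" and y="(6961/2500::real)"]) (simp_all add: power_divide)
  then show ?thesis unfolding e by blast
qed

lemma ck9: "\<exists>l. exp 1 \<le> l \<and> l \<le> ln (real (qprod 9)) \<and> real (9::nat) * ln 2 * ln l < 0.96 * l"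
proof -
  have e: "qprod 9 = 223092870" by (simp add: qprod_num qprod_Suc qprod_0 q_vals q1)
  have "exp 1 \<le> (192169/10000::real) \<and> (192169/10000::real) \<le> ln (real (223092870::nat)) \<and> real (9::nat) * ln 2 * ln (192169/10000::real) < 0.96 * (192169/10000::real)"
    by (rule case_gen[where a=27 and X="(21609054208/125::real)" and y="(2957/1000::real)"]) (simp_all add: power_divide)
  then show ?thesis unfolding e by blast
qed

lemma ck10: "\<exists>l. exp 1 \<le> l \<and> l \<le> ln (real (qprod 10)) \<and> real (10::nat) * ln 2 * ln l < 0.96 * l"
proof -
  have e: "qprod 10 = 6469693230" by (simp add: qprod_num qprod_Suc qprod_0 q_vals q1)
  have "exp 1 \<le> (28231/1250::real) \<and> (28231/1250::real) \<le> ln (real (6469693230::nat)) \<and> real (10::nat) * ln 2 * ln (28231/1250::real) < 0.96 * (28231/1250::real)"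
    by (rule case_gen[where a=32 and X="(658203738112/125::real)" and y="(31277/10000::real)"]) (simp_all add: power_divide)
  then show ?thesis unfolding e by blast
qed

lemma ck11: "\<exists>l. exp 1 \<le> l \<and> l \<le> ln (real (qprod 11)) \<and> real (11::nat) * ln 2 * ln l < 0.96 * l"
proof -
  have e: "qprod 11 = 200560490130" by (simp add: qprod_num qprod_Suc qprod_0 q_vals q1)
  have "exp 1 \<le> (52037/2000::real) \<and> (52037/2000::real) \<le> ln (real (200560490130::nat)) \<and> real (11::nat) * ln 2 * ln (52037/2000::real) < 0.96 * (52037/2000::real)"
    by (rule case_gen[where a=37 and X="(20736102105088/125::real)" and y="(8189/2500::real)"]) (simp_all add: power_divide)
  then show ?thesis unfolding e by blast
qed

lemma ck12: "\<exists>l. exp 1 \<le> l \<and> l \<le> ln (real (qprod 12)) \<and> real (12::nat) * ln 2 * ln l < 0.96 * l"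
proof -
  have e: "qprod 12 = 7420738134810" by (simp add: qprod_num qprod_Suc qprod_0 q_vals q1)
  have "exp 1 \<le> (296269/10000::real) \<and> (296269/10000::real) \<le> ln (real (7420738134810::nat)) \<and> real (12::nat) * ln 2 * ln (296269/10000::real) < 0.96 * (296269/10000::real)"
    by (rule case_gen[where a=42 and X="(713583046426624/125::real)" and y="(34191/10000::real)"]) (simp_all add: power_divide)
  then show ?thesis unfolding e by blast
qed

lemma ck13: "\<exists>l. exp 1 \<le> l \<and> l \<le> ln (real (qprod 13)) \<and> real (13::nat) * ln 2 * ln l < 0.96 * l"
proof -
  have e: "qprod 13 = 304250263527210" by (simp add: qprod_num qprod_Suc qprod_0 q_vals q1)
  have "exp 1 \<le> (333427/10000::real) \<and> (333427/10000::real) \<le> ln (real (304250263527210::nat)) \<and> real (13::nat) * ln 2 * ln (333427/10000::real) < 0.96 * (333427/10000::real)"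
    by (rule case_gen[where a=48 and X="(36556562600296448/125::real)" and y="(35519/10000::real)"]) (simp_all add: power_divide)
  then show ?thesis unfolding e by blast
qed

lemma ck14: "\<exists>l. exp 1 \<le> l \<and> l \<le> ln (real (qprod 14)) \<and> real (14::nat) * ln 2 * ln l < 0.96 * l"
proof -
  have e: "qprod 14 = 13082761331670030" by (simp add: qprod_num qprod_Suc qprod_0 q_vals q1)
  have "exp 1 \<le> (185511/5000::real) \<and> (185511/5000::real) \<le> ln (real (13082761331670030::nat)) \<and> real (14::nat) * ln 2 * ln (185511/5000::real) < 0.96 * (185511/5000::real)"
    by (rule case_gen[where a=53 and X="(1355583487838519296/125::real)" and y="(36701/10000::real)"]) (simp_all add: power_divide)
  then show ?thesis unfolding e by blast
qed

lemma ck15: "\<exists>l. exp 1 \<le> l \<and> l \<le> ln (real (qprod 15)) \<and> real (15::nat) * ln 2 * ln l < 0.96 * l"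
proof -
  have e: "qprod 15 = 614889782588491410" by (simp add: qprod_num qprod_Suc qprod_0 q_vals q1)
  have "exp 1 \<le> (409527/10000::real) \<and> (409527/10000::real) \<le> ln (real (614889782588491410::nat)) \<and> real (15::nat) * ln 2 * ln (409527/10000::real) < 0.96 * (409527/10000::real)"
    by (rule case_gen[where a=59 and X="(74363437047141629952/125::real)" and y="(37809/10000::real)"]) (simp_all add: power_divide)
  then show ?thesis unfolding e by blast
qed

lemma ck16: "\<exists>l. exp 1 \<le> l \<and> l \<le> ln (real (qprod 16)) \<and> real (16::nat) * ln 2 * ln l < 0.96 * l"
proof -
  have e: "qprod 16 = 32589158477190044730" by (simp add: qprod_num qprod_Suc qprod_0 q_vals q1)
  have "exp 1 \<le> (89837/2000::real) \<and> (89837/2000::real) \<le> ln (real (32589158477190044730::nat)) \<and> real (16::nat) * ln 2 * ln (89837/2000::real) < 0.96 * (89837/2000::real)"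
    by (rule case_gen[where a=64 and X="(3062159516235785568256/125::real)" and y="(38879/10000::real)"]) (simp_all add: power_divide)
  then show ?thesis unfolding e by blast
qed


lemma step_real:
  assumes "28 \<le> k"
  shows "real (Suc k) ^ Suc k \<le> real k ^ k * (3 * real k - 5)"
proof -
  have k0: "0 < real k" using assms by simp
  have "1 + 1 / real k \<le> exp (1 / real k)" by (rule exp_ge_add_one_self)
  then have "(1 + 1 / real k) ^ k \<le> exp (1 / real k) ^ k"
    by (rule power_mono) (use k0 in auto)
  also have "\<dots> = exp (real k * (1 / real k))" by (rule exp_of_nat_mult[symmetric])
  also have "\<dots> = exp 1" using k0 by simp
  finally have b: "(1 + 1 / real k) ^ k \<le> exp 1" .
  have "real (Suc k) = real k * (1 + 1 / real k)" using k0 by (simp add: field_simps)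
  then have "real (Suc k) ^ k = real k ^ k * (1 + 1 / real k) ^ k"
    by (simp add: power_mult_distrib)
  then have "real (Suc k) ^ Suc k = (real k + 1) * (real k ^ k * (1 + 1 / real k) ^ k)"
    by simp
  also have "\<dots> \<le> (real k + 1) * (real k ^ k * 2.72)"
    using b e_hi k0 by (intro mult_left_mono) auto
  also have "\<dots> = real k ^ k * (2.72 * (real k + 1))" by (simp add: algebra_simps)
  also have "\<dots> \<le> real k ^ k * (3 * real k - 5)"
    using assms k0 by (intro mult_left_mono) auto
  finally show ?thesis .
qed

lemma qprod_ge: assumes "17 \<le> k" shows "k ^ k \<le> qprod k"
proof (cases "k \<le> 28")
  case True
  then have "k = 17 \<or> k = 18 \<or> k = 19 \<or> k = 20 \<or> k = 21 \<or> k = 22 \<or> k = 23 \<or> k = 24 \<or>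
    k = 25 \<or> k = 26 \<or> k = 27 \<or> k = 28" using assms by arith
  then show ?thesis
    by (elim disjE) (simp_all add: qprod_num qprod_Suc qprod_0 q_vals q1 q_big)
next
  case False
  have base: "28 ^ 28 \<le> qprod 28" by (simp add: qprod_num qprod_Suc qprod_0 q_vals q1 q_big)
  show ?thesis
  proof (rule nat_induct_at_least[of 28 k])
    show "28 \<le> k" using False by simp
    show "28 ^ 28 \<le> qprod 28" by (rule base)
  next
    fix n assume n: "28 \<le> n" and IH: "n ^ n \<le> qprod n"
    have qn: "q n = 3 * n - 5" using n by (simp add: q_big)
    have "real (Suc n) ^ Suc n \<le> real n ^ n * (3 * real n - 5)" by (rule step_real[OF n])
    also have "\<dots> = real (n ^ n * (3 * n - 5))" using n by (simp add: of_nat_diff)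
    finally have "real (Suc n ^ Suc n) \<le> real (n ^ n * (3 * n - 5))" by (simp only: of_nat_power)
    then have "Suc n ^ Suc n \<le> n ^ n * (3 * n - 5)" by (simp only: of_nat_le_iff)
    also have "\<dots> \<le> qprod n * q n" unfolding qn using IH by (rule mult_right_mono) simp
    finally show "Suc n ^ Suc n \<le> qprod (Suc n)" by (simp add: qprod_Suc)
  qed
qed

lemma ln_le_div_e: assumes "0 < (y::real)" shows "ln y \<le> y / exp 1"
proof -
  have "ln (y / exp 1) \<le> y / exp 1 - 1" by (rule ln_le_minus_one) (use assms in simp)
  moreover have "ln (y / exp 1) = ln y - 1" using assms by (simp add: ln_div)
  ultimately show ?thesis by simp
qed

lemma final_step:
  fixes t l :: real and k :: nat
  assumes "exp 1 \<le> l" "l \<le> ln t" "real k * ln 2 * ln l < 0.96 * l" "0 < t"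
  shows "2 ^ k < t powr (0.96 / ln (ln t))"
proof -
  define s where "s = ln t"
  have l0: "0 < l" using assms(1) by (meson exp_gt_zero less_le_trans)
  have ls: "l \<le> s" using assms(2) s_def by simp
  have s0: "0 < s" using l0 ls by simp
  have lnl: "1 \<le> ln l" using assms(1) l0 by (subst ln_ge_iff) auto
  have lns: "1 \<le> ln s" using lnl ls l0 s0 by (meson ln_le_cancel_iff order_trans)
  have mono: "ln s / s \<le> ln l / l" by (rule ln_x_over_x_mono[OF assms(1) ls])
  have "inverse (ln l / l) \<le> inverse (ln s / s)"
    by (rule le_imp_inverse_le[OF mono]) (use s0 lns in \<open>intro divide_pos_pos; linarith\<close>)
  then have "l / ln l \<le> s / ln s" by simp
  have k2: "real k * ln 2 < 0.96 * l / ln l"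
    using assms(3) lnl by (simp add: field_simps)
  also have "\<dots> \<le> 0.96 * s / ln s"
    using \<open>l / ln l \<le> s / ln s\<close> by (simp add: divide_le_eq_1 mult.assoc times_divide_eq_right[symmetric] del: times_divide_eq_right)
  finally have "real k * ln 2 < 0.96 / ln s * s" by simp
  then have "exp (real k * ln 2) < exp (0.96 / ln s * s)" by simp
  moreover have "exp (real k * ln 2) = 2 ^ k" by (simp add: exp_of_nat_mult)
  moreover have "t powr (0.96 / ln (ln t)) = exp (0.96 / ln s * s)"
    using assms(4) by (simp add: powr_def s_def)
  ultimately show ?thesis by simp
qed

lemma small_k:
  fixes t :: real and k :: nat
  assumes "3 \<le> t" "k \<le> 3"
  shows "2 ^ k < t powr (0.96 / ln (ln t))"
proof -
  define s where "s = ln t"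
  have "1 < ln (3::real)" by (rule ln3_gt_1)
  also have "ln 3 \<le> s" unfolding s_def using assms(1) by simp
  finally have s1: "1 < s" .
  have lns: "0 < ln s" using s1 by simp
  have "ln s \<le> s / exp 1" by (rule ln_le_div_e) (use s1 in simp)
  then have "exp 1 \<le> s / ln s" using lns by (simp add: field_simps)
  then have "2.7 \<le> s / ln s" using e_lo by linarith
  then have "0.96 * 2.7 \<le> 0.96 * (s / ln s)" by (rule mult_left_mono) simp
  then have a: "2.592 \<le> 0.96 * (s / ln s)" by simp
  have "real k * ln 2 \<le> 3 * 0.6932"
    using assms(2) ln2_hi by (intro mult_mono) auto
  then have "real k * ln 2 < 0.96 / ln s * s" using a by simp
  then have "exp (real k * ln 2) < exp (0.96 / ln s * s)" by simp
  moreover have "exp (real k * ln 2) = 2 ^ k" by (simp add: exp_of_nat_mult)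
  moreover have "t powr (0.96 / ln (ln t)) = exp (0.96 / ln s * s)"
    using assms(1) by (simp add: powr_def s_def)
  ultimately show ?thesis by simp
qed

lemma big_k:
  fixes k :: nat
  assumes "17 \<le> k"
  shows "exp 1 \<le> real k * ln (real k)" "real k * ln 2 * ln (real k * ln (real k)) < 0.96 * (real k * ln (real k))"
proof -
  have k: "17 \<le> real k" using assms by simp
  have "exp 1 \<le> (3::real)" using e_less_272 by simp
  then have "exp 1 \<le> real k" using k by linarith
  then have lk: "1 \<le> ln (real k)" using k by (subst ln_ge_iff) auto
  then have kl: "real k * 1 \<le> real k * ln (real k)" using k by (intro mult_left_mono) auto
  then show "exp 1 \<le> real k * ln (real k)" using \<open>exp 1 \<le> real k\<close> by simp
  have "ln (real k * ln (real k)) = ln (real k) + ln (ln (real k))"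
    using k lk by (simp add: ln_mult)
  also have "ln (ln (real k)) \<le> ln (real k) / exp 1" by (rule ln_le_div_e) (use lk in simp)
  also have "\<dots> \<le> ln (real k) / 2.7" using e_lo lk by (intro divide_left_mono) auto
  finally have A: "ln (real k * ln (real k)) \<le> ln (real k) * (1 + 1 / 2.7)" by (simp add: algebra_simps)
  have "real k * ln 2 * ln (real k * ln (real k)) \<le> real k * 0.6932 * (ln (real k) * (1 + 1 / 2.7))"
  proof (rule mult_mono)
    show "real k * ln 2 \<le> real k * 0.6932" using ln2_hi k by (intro mult_left_mono) auto
    show "0 \<le> ln (real k * ln (real k))" by (rule ln_ge_zero) (use kl k in linarith)
  qed (use A k in auto)
  also have "\<dots> < 0.96 * (real k * ln (real k))" using k lk by (simp add: algebra_simps)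
  finally show "real k * ln 2 * ln (real k * ln (real k)) < 0.96 * (real k * ln (real k))" .
qed

theorem lemma2p4:
  fixes t :: nat
  assumes "t \<ge> 3"
  shows "real (W (t - 1)) < real t powr (0.96 / ln (ln (real t)))"
proof -
  define m where "m = t - 1"
  have m0: "0 < m" using assms m_def by simp
  define P where "P = prime_factors m"
  define k where "k = card P"
  have W: "real (W m) \<le> 2 ^ k"
  proof -
    have "W m \<le> 2 ^ k" unfolding k_def P_def by (rule W_le[OF m0])
    then show ?thesis by (metis of_nat_le_iff of_nat_numeral of_nat_power)
  qed
  have "qprod k \<le> \<Prod>P"
    unfolding qprod_def k_def by (rule prod_primes_lower) (auto simp: P_def)
  also have "\<Prod>P \<le> m" unfolding P_def by (rule prod_pf_le[OF m0])
  finally have qm: "qprod k \<le> m" .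
  have tm: "t = m + 1" using assms m_def by simp
  have t0: "0 < real t" using assms by simp
  have lnq: "ln (real (qprod k)) \<le> ln (real t)"
    using qm tm qprod_pos[of k] by simp
  have "2 ^ k < real t powr (0.96 / ln (ln (real t)))"
  proof (cases "k \<le> 3")
    case True
    then show ?thesis by (intro small_k) (use assms in auto)
  next
    case False
    show ?thesis
    proof (cases "k \<le> 16")
      case True
      then have "k = 4 \<or> k = 5 \<or> k = 6 \<or> k = 7 \<or> k = 8 \<or> k = 9 \<or> k = 10 \<or> k = 11 \<or> k = 12 \<or>
        k = 13 \<or> k = 14 \<or> k = 15 \<or> k = 16" using False by arith
      then have "\<exists>l. exp 1 \<le> l \<and> l \<le> ln (real (qprod k)) \<and> real k * ln 2 * ln l < 0.96 * l"
        using ck4 ck5 ck6 ck7 ck8 ck9 ck10 ck11 ck12 ck13 ck14 ck15 ck16 by (elim disjE) simp_all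
      then obtain l where l: "exp 1 \<le> l" "l \<le> ln (real (qprod k))" "real k * ln 2 * ln l < 0.96 * l"
        by blast
      show ?thesis by (rule final_step[OF l(1) _ l(3) t0]) (use l(2) lnq in linarith)
    next
      case c2: False
      then have k17: "17 \<le> k" by simp
      have "real k * ln (real k) = ln (real (k ^ k))" by (simp add: ln_realpow)
      also have "\<dots> \<le> ln (real (qprod k))"
        using qprod_ge[OF k17] qprod_pos[of k] k17 by simp
      finally have "real k * ln (real k) \<le> ln (real t)" using lnq by linarith
      then show ?thesis by (rule final_step[OF big_k(1)[OF k17] _ big_k(2)[OF k17] t0])
    qed
  qed
  moreover have "real (W (t - 1)) \<le> 2 ^ k" using W m_def by simp
  ultimately show ?thesis by linarith
qed

end
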